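(* Let $\{(\mathbf{x}^k,\mathbf{y}^k,\boldsymbol{\gamma}^k)\}$ be generated by the two-block linearized ADMM below, applied under the standing assumptions (i)–(iv) below. Then for every $k\ge0$, $$L_\beta(\mathbf{x}^k,\mathbf{y}^k,\boldsymbol{\gamma}^k)-L_\beta(\mathbf{x}^{k+1},\mathbf{y}^k,\boldsymbol{\gamma}^k)\ge C_0\|\mathbf{x}^{k+1}-\mathbf{x}^k\|^2,$$ where $C_0=\frac{L_x-L_g-\beta L_{\mathbf{A}}}{2}$ and $L_{\mathbf{A}}$ is the largest eigenvalue of $\mathbf{A}^{\rm T}\mathbf{A}$.
   Context: Problem: minimize $g(\mathbf{x},\mathbf{y})+f(\mathbf{x})+h(\mathbf{y})$ s.t. $\mathbf{A}\mathbf{x}+\mathbf{B}\mathbf{y}=\mathbf{0}$, $\mathbf{x}\in\mathbb{R}^p$, $\mathbf{y}\in\mathbb{R}^q$, $\mathbf{A}\in\mathbb{R}^{n\times p}$, $\mathbf{B}\in\mathbb{R}^{n\times q}$; $f$ possibly nonconvex nonsmooth. Standing assumptions: (i) $\nabla h$ is $L_h$-Lipschitz; (ii) $\nabla g$ is $L_g$-Lipschitz; (iii) $g+f+h$ is lower bounded on the feasible set $\{\mathbf{A}\mathbf{x}+\mathbf{B}\mathbf{y}=\mathbf{0}\}$ and coercive w.r.t. $\mathbf{y}$ over it; (iv) $\mathbf{B}$ has full column rank and $\mathrm{Im}(\mathbf{A})\subset\mathrm{Im}(\mathbf{B})$. $L_\beta(\mathbf{x},\mathbf{y},\boldsymbol{\gamma})=g(\mathbf{x},\mathbf{y})+f(\mathbf{x})+h(\mathbf{y})+\langle\boldsymbol{\gamma},\mathbf{A}\mathbf{x}+\mathbf{B}\mathbf{y}\rangle+\frac{\beta}{2}\|\mathbf{A}\mathbf{x}+\mathbf{B}\mathbf{y}\|^2$.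 Algorithm (parameters $L_x,L_y,\beta>0$): $\mathbf{x}^{k+1}\in\arg\min\bar f^k$, $\mathbf{y}^{k+1}=\arg\min\bar h^k$, $\boldsymbol{\gamma}^{k+1}=\boldsymbol{\gamma}^k+\beta(\mathbf{A}\mathbf{x}^{k+1}+\mathbf{B}\mathbf{y}^{k+1})$, where $\bar f^k(\mathbf{x})=f(\mathbf{x})+\langle\boldsymbol{\gamma}^k,\mathbf{A}\mathbf{x}\rangle+\frac{L_x}{2}\|\mathbf{x}-\mathbf{x}^k\|^2+\langle\mathbf{x}-\mathbf{x}^k,\nabla_{\mathbf{x}}g(\mathbf{x}^k,\mathbf{y}^k)+\beta\mathbf{A}^{\rm T}(\mathbf{A}\mathbf{x}^k+\mathbf{B}\mathbf{y}^k)\rangle$, $\bar h^k(\mathbf{y})=\langle\boldsymbol{\gamma}^k,\mathbf{B}\mathbf{y}\rangle+\frac{L_y}{2}\|\mathbf{y}-\mathbf{y}^k\|^2+\frac{\beta}{2}\|\mathbf{A}\mathbf{x}^{k+1}+\mathbf{B}\mathbf{y}\|^2+\langle\mathbf{y}-\mathbf{y}^k,\nabla_{\mathbf{y}}g(\mathbf{x}^{k+1},\mathbf{y}^k)+\nabla h(\mathbf{y}^k)\rangle$. *)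

theory Defs
  imports "HOL-Analysis.Analysis"
begin

definition aug_lag ::
  "(real^'p \<Rightarrow> real^'q \<Rightarrow> real) \<Rightarrow> (real^'p \<Rightarrow> real) \<Rightarrow> (real^'q \<Rightarrow> real) \<Rightarrow>
   real^'p^'n \<Rightarrow> real^'q^'n \<Rightarrow> real \<Rightarrow> real^'p \<Rightarrow> real^'q \<Rightarrow> real^'n \<Rightarrow> real" where
  "aug_lag g f h A B \<beta> x y \<gamma> =
     g x y + f x + h y + \<gamma> \<bullet> (A *v x + B *v y) + \<beta> / 2 * (norm (A *v x + B *v y))\<^sup>2"

definition is_eigenvalue :: "real^'n^'n \<Rightarrow> real \<Rightarrow> bool" where
  "is_eigenvalue M l \<longleftrightarrow> (\<exists>v. v \<noteq> 0 \<and> M *v v = l *\<^sub>R v)"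

definition is_largest_eigenvalue :: "real^'n^'n \<Rightarrow> real \<Rightarrow> bool" where
  "is_largest_eigenvalue M l \<longleftrightarrow> is_eigenvalue M l \<and> (\<forall>m. is_eigenvalue M m \<longrightarrow> m \<le> l)"

definition fbar ::
  "(real^'p \<Rightarrow> real) \<Rightarrow> real^'p^'n \<Rightarrow> real^'q^'n \<Rightarrow> real \<Rightarrow> real \<Rightarrow> real^'p \<Rightarrow> real^'n
   \<Rightarrow> real^'p \<Rightarrow> real^'q \<Rightarrow> real^'p \<Rightarrow> real" where
  "fbar f A B \<beta> Lx gx \<gamma>k xk yk x =
     f x + \<gamma>k \<bullet> (A *v x) + Lx / 2 * (norm (x - xk))\<^sup>2
     + (x - xk) \<bullet> (gx + \<beta> *\<^sub>R (transpose A *v (A *v xk + B *v yk)))"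

definition hbar ::
  "real^'p^'n \<Rightarrow> real^'q^'n \<Rightarrow> real \<Rightarrow> real \<Rightarrow> real^'q \<Rightarrow> real^'n
   \<Rightarrow> real^'p \<Rightarrow> real^'q \<Rightarrow> real^'q \<Rightarrow> real" where
  "hbar A B \<beta> Ly gyh \<gamma>k xk1 yk y =
     \<gamma>k \<bullet> (B *v y) + Ly / 2 * (norm (y - yk))\<^sup>2 + \<beta> / 2 * (norm (A *v xk1 + B *v y))\<^sup>2
     + (y - yk) \<bullet> gyh"

end

theory Submission
  imports Defs
begin

lemma inner_transpose: "inner (w::real^'p) (transpose (A::real^'p^'n) *v z) = inner (A *v w) z"
  by (metis dot_lmul_matrix vector_transpose_matrix)

lemma descent:
  fixes g :: "real^'p \<Rightarrow> real^'q \<Rightarrow> real"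
    and Gg :: "(real^'p) \<times> (real^'q) \<Rightarrow> (real^'p) \<times> (real^'q)"
  assumes g_grad: "\<And>z. ((\<lambda>z. g (fst z) (snd z)) has_derivative (\<lambda>u. Gg z \<bullet> u)) (at z)"
    and g_lip: "\<And>z w. norm (Gg z - Gg w) \<le> Lg * norm (z - w)"
  shows "g x1 y \<le> g x0 y + (x1 - x0) \<bullet> fst (Gg (x0, y)) + Lg / 2 * (norm (x1 - x0))\<^sup>2"
proof -
  define d where "d = x1 - x0"
  define G0 where "G0 = fst (Gg (x0, y))"
  define \<psi> where "\<psi> = (\<lambda>t::real. g (x0 + t *\<^sub>R d) y - t * (d \<bullet> G0) - Lg / 2 * t\<^sup>2 * (norm d)\<^sup>2)"
  have dphi: "((\<lambda>t::real. g (x0 + t *\<^sub>R d) y) has_real_derivative (fst (Gg (x0 + t *\<^sub>R d, y)) \<bullet> d)) (at t)" for t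
  proof -
    have l: "((\<lambda>t::real. (x0 + t *\<^sub>R d, y)) has_derivative (\<lambda>u. (u *\<^sub>R d, 0))) (at t)"
      by (auto intro!: derivative_eq_intros)
    have c: "((\<lambda>z. g (fst z) (snd z)) \<circ> (\<lambda>t::real. (x0 + t *\<^sub>R d, y)) has_derivative
           (\<lambda>u. Gg (x0 + t *\<^sub>R d, y) \<bullet> u) \<circ> (\<lambda>u. (u *\<^sub>R d, 0))) (at t)"
      by (rule diff_chain_at[OF l g_grad])
    have "((\<lambda>t::real. g (x0 + t *\<^sub>R d) y) has_derivative (\<lambda>u. u * (fst (Gg (x0 + t *\<^sub>R d, y)) \<bullet> d))) (at t)"
    proof -
      have eq: "(\<lambda>u. Gg (x0 + t *\<^sub>R d, y) \<bullet> u) \<circ> (\<lambda>u. (u *\<^sub>R d, 0)) = (\<lambda>u. u * (fst (Gg (x0 + t *\<^sub>R d, y)) \<bullet> d))"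
        by (rule ext, cases "Gg (x0 + t *\<^sub>R d, y)") (simp add: inner_commute)
      show ?thesis using c unfolding eq by (simp add: o_def)
    qed
    then show ?thesis by (simp add: has_real_derivative_iff_has_vector_derivative has_vector_derivative_def mult.commute)
  qed
  have "\<psi> 1 \<le> \<psi> 0"
  proof (rule DERIV_nonpos_imp_nonincreasing[of 0 1 \<psi>])
    fix t :: real assume t: "0 \<le> t" "t \<le> 1"
    have D: "(\<psi> has_real_derivative (fst (Gg (x0 + t *\<^sub>R d, y)) \<bullet> d - d \<bullet> G0 - Lg / 2 * (2 * t) * (norm d)\<^sup>2)) (at t)"
      unfolding \<psi>_def
      by (auto intro!: derivative_eq_intros dphi)
    have "(fst (Gg (x0 + t *\<^sub>R d, y)) - G0) \<bullet> d \<le> norm (fst (Gg (x0 + t *\<^sub>R d, y)) - G0) * norm d"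
      by (rule norm_cauchy_schwarz)
    also have "norm (fst (Gg (x0 + t *\<^sub>R d, y)) - G0) \<le> norm (Gg (x0 + t *\<^sub>R d, y) - Gg (x0, y))"
      unfolding G0_def by (metis fst_diff norm_fst_le prod.collapse)
    also have "\<dots> \<le> Lg * norm ((x0 + t *\<^sub>R d, y) - (x0, y))" by (rule g_lip)
    also have "norm ((x0 + t *\<^sub>R d, y) - (x0, y)) = t * norm d"
      using t by (simp add: norm_Pair)
    finally have "(fst (Gg (x0 + t *\<^sub>R d, y)) - G0) \<bullet> d \<le> Lg * (t * norm d) * norm d"
      by (simp add: mult_right_mono)
    then have "fst (Gg (x0 + t *\<^sub>R d, y)) \<bullet> d - d \<bullet> G0 - Lg / 2 * (2 * t) * (norm d)\<^sup>2 \<le> 0"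
      by (simp add: inner_diff_left inner_commute power2_eq_square algebra_simps)
    with D show "\<exists>y. DERIV \<psi> t :> y \<and> y \<le> 0" by blast
  qed simp
  then show ?thesis
    by (simp add: \<psi>_def d_def G0_def inner_commute)
qed

lemma nsq: "(norm (a + t *\<^sub>R b))\<^sup>2 = (norm a)\<^sup>2 + 2 * t * (a \<bullet> b) + t\<^sup>2 * (norm b)\<^sup>2"
  for a b :: "'a::real_inner"
  unfolding power2_norm_eq_inner
  by (simp add: inner_add_left inner_add_right inner_commute power2_eq_square algebra_simps)

lemma eig_bound:
  fixes A :: "real^'p^'n"
  assumes LA: "is_largest_eigenvalue (transpose A ** A) LA"
  shows "(norm (A *v d))\<^sup>2 \<le> LA * (norm d)\<^sup>2"
proof -
  define q where "q = (\<lambda>v. (norm (A *v v))\<^sup>2)"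
  have cont: "continuous_on (sphere 0 1) q"
    unfolding q_def by (intro continuous_intros linear_continuous_on matrix_vector_mul_bounded_linear)
  have ne: "sphere (0::real^'p) 1 \<noteq> {}" by simp
  obtain u where u: "u \<in> sphere 0 1" and umax: "\<And>v. v \<in> sphere 0 1 \<Longrightarrow> q v \<le> q u"
    using continuous_attains_sup[OF compact_sphere ne cont] by blast
  define \<mu> where "\<mu> = q u"
  have nu: "norm u = 1" using u by simp
  have bound: "q v \<le> \<mu> * (norm v)\<^sup>2" for v
  proof (cases "v = 0")
    case True then show ?thesis by (simp add: q_def)
  next
    case False
    have "(inverse (norm v)) *\<^sub>R v \<in> sphere 0 1" using False by simp
    then have "q ((inverse (norm v)) *\<^sub>R v) \<le> \<mu>" using umax \<mu>_def by blast
    moreover have "q ((inverse (norm v)) *\<^sub>R v) = q v / (norm v)\<^sup>2"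
      by (simp add: q_def matrix_vector_mult_scaleR power_mult_distrib field_simps)
    ultimately have "q v / (norm v)\<^sup>2 \<le> \<mu>" by simp
    moreover have "(norm v)\<^sup>2 > 0" using False by simp
    ultimately show ?thesis by (simp add: divide_le_eq mult.commute)
  qed
  have key: "(A *v u) \<bullet> (A *v w) - \<mu> * (u \<bullet> w) = 0" for w
  proof -
    define a where "a = (A *v u) \<bullet> (A *v w) - \<mu> * (u \<bullet> w)"
    define b where "b = q w - \<mu> * (norm w)\<^sup>2"
    have b0: "b \<le> 0" using bound[of w] b_def by simp
    have ineq: "2 * t * a + t\<^sup>2 * b \<le> 0" for t
    proof -
      have "q (u + t *\<^sub>R w) \<le> \<mu> * (norm (u + t *\<^sub>R w))\<^sup>2" by (rule bound)
      moreover have "q (u + t *\<^sub>R w) = \<mu> + 2 * t * ((A *v u) \<bullet> (A *v w)) + t\<^sup>2 * q w"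
        by (simp add: q_def \<mu>_def matrix_vector_right_distrib matrix_vector_mult_scaleR nsq)
      moreover have "(norm (u + t *\<^sub>R w))\<^sup>2 = 1 + 2 * t * (u \<bullet> w) + t\<^sup>2 * (norm w)\<^sup>2"
        using nu by (simp add: nsq)
      ultimately show ?thesis unfolding a_def b_def by (simp add: algebra_simps)
    qed
    define c where "c = 1 - b"
    have c1: "c \<ge> 1" using b0 c_def by simp
    have "2 * (a / c) * a + (a / c)\<^sup>2 * b = a\<^sup>2 * (c + 1) / c\<^sup>2"
    proof -
      have bc: "b = 1 - c" by (simp add: c_def)
      have "c \<noteq> 0" using c1 by simp
      then show ?thesis unfolding bc by (simp add: field_simps power2_eq_square)
    qed
    then have "a\<^sup>2 * (c + 1) / c\<^sup>2 \<le> 0" using ineq[of "a / c"] by simp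
    then have "a\<^sup>2 * (c + 1) \<le> 0" using c1 by (simp add: divide_le_0_iff)
    then have "a\<^sup>2 \<le> 0" using c1 by (simp add: mult_le_0_iff)
    then show ?thesis unfolding a_def by simp
  qed
  define w where "w = (transpose A ** A) *v u - \<mu> *\<^sub>R u"
  have "w \<bullet> w = (A *v u) \<bullet> (A *v w) - \<mu> * (u \<bullet> w)"
  proof -
    have wz: "w = transpose A *v (A *v u) - \<mu> *\<^sub>R u"
      by (simp add: w_def matrix_vector_mul_assoc)
    have "w \<bullet> w = w \<bullet> (transpose A *v (A *v u) - \<mu> *\<^sub>R u)" using wz by simp
    also have "\<dots> = w \<bullet> (transpose A *v (A *v u)) - \<mu> * (w \<bullet> u)"
      by (simp add: inner_diff_right)
    also have "\<dots> = (A *v u) \<bullet> (A *v w) - \<mu> * (u \<bullet> w)"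
      by (simp only: inner_transpose inner_commute)
    finally show ?thesis .
  qed
  then have "w = 0" using key[of w] by simp
  then have "is_eigenvalue (transpose A ** A) \<mu>"
    unfolding is_eigenvalue_def using nu by (intro exI[of _ u]) (auto simp: w_def)
  then have "\<mu> \<le> LA" using LA unfolding is_largest_eigenvalue_def by blast
  then have "\<mu> * (norm d)\<^sup>2 \<le> LA * (norm d)\<^sup>2" by (simp add: mult_right_mono)
  with bound[of d] show ?thesis by (simp add: q_def)
qed


theorem lemma5:
  fixes g :: "real^'p \<Rightarrow> real^'q \<Rightarrow> real"
    and f :: "real^'p \<Rightarrow> real"
    and h :: "real^'q \<Rightarrow> real"
    and Gg :: "(real^'p) \<times> (real^'q) \<Rightarrow> (real^'p) \<times> (real^'q)"
    and Gh :: "real^'q \<Rightarrow> real^'q"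
    and A :: "real^'p^'n" and B :: "real^'q^'n"
    and Lh Lg Lx Ly \<beta> LA :: real
    and x :: "nat \<Rightarrow> real^'p" and y :: "nat \<Rightarrow> real^'q" and \<gamma> :: "nat \<Rightarrow> real^'n"
  assumes h_grad: "\<And>v. (h has_derivative (\<lambda>u. Gh v \<bullet> u)) (at v)"
    and h_lip: "\<And>v w. norm (Gh v - Gh w) \<le> Lh * norm (v - w)"
    and g_grad: "\<And>z. ((\<lambda>z. g (fst z) (snd z)) has_derivative (\<lambda>u. Gg z \<bullet> u)) (at z)"
    and g_lip: "\<And>z w. norm (Gg z - Gg w) \<le> Lg * norm (z - w)"
    and lower_bdd: "\<exists>c. \<forall>u v. A *v u + B *v v = 0 \<longrightarrow> c \<le> g u v + f u + h v"
    and coercive: "\<And>M. \<exists>R. \<forall>u v. A *v u + B *v v = 0 \<and> norm v \<ge> R \<longrightarrow> g u v + f u + h v \<ge> M"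
    and B_rank: "inj ((*v) B)"
    and Im_AB: "range ((*v) A) \<subseteq> range ((*v) B)"
    and pos: "Lx > 0" "Ly > 0" "\<beta> > 0"
    and LA: "is_largest_eigenvalue (transpose A ** A) LA"
    and x_step: "\<And>k z. fbar f A B \<beta> Lx (fst (Gg (x k, y k))) (\<gamma> k) (x k) (y k) (x (Suc k))
                        \<le> fbar f A B \<beta> Lx (fst (Gg (x k, y k))) (\<gamma> k) (x k) (y k) z"
    and y_step: "\<And>k w. hbar A B \<beta> Ly (snd (Gg (x (Suc k), y k)) + Gh (y k)) (\<gamma> k) (x (Suc k)) (y k) (y (Suc k))
                        \<le> hbar A B \<beta> Ly (snd (Gg (x (Suc k), y k)) + Gh (y k)) (\<gamma> k) (x (Suc k)) (y k) w"
    and \<gamma>_step: "\<And>k. \<gamma> (Suc k) = \<gamma> k + \<beta> *\<^sub>R (A *v x (Suc k) + B *v y (Suc k))"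
  shows "\<forall>k. aug_lag g f h A B \<beta> (x k) (y k) (\<gamma> k) - aug_lag g f h A B \<beta> (x (Suc k)) (y k) (\<gamma> k)
             \<ge> (Lx - Lg - \<beta> * LA) / 2 * (norm (x (Suc k) - x k))\<^sup>2"
proof
  fix k
  define xk where "xk = x k"
  define x1 where "x1 = x (Suc k)"
  define yk where "yk = y k"
  define gk where "gk = \<gamma> k"
  define d where "d = x1 - xk"
  define gx where "gx = fst (Gg (xk, yk))"
  define r where "r = A *v xk + B *v yk"
  have s1: "fbar f A B \<beta> Lx gx gk xk yk x1 \<le> fbar f A B \<beta> Lx gx gk xk yk xk"
    using x_step[of k xk] unfolding xk_def x1_def yk_def gk_def gx_def by simp
  have tr: "d \<bullet> (\<beta> *\<^sub>R (transpose A *v r)) = \<beta> * ((A *v d) \<bullet> r)"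
    by (simp only: inner_scaleR_right inner_transpose)
  have s1': "f x1 + gk \<bullet> (A *v x1) + Lx / 2 * (norm d)\<^sup>2 + d \<bullet> gx + \<beta> * ((A *v d) \<bullet> r)
      \<le> f xk + gk \<bullet> (A *v xk)"
    using s1 tr pos(3) unfolding fbar_def d_def[symmetric] r_def[symmetric] by (auto simp add: inner_add_right)
  have s2: "g x1 yk \<le> g xk yk + d \<bullet> gx + Lg / 2 * (norm d)\<^sup>2"
    unfolding d_def gx_def by (rule descent[OF g_grad g_lip])
  have Ax1: "A *v x1 = A *v xk + A *v d" by (simp add: d_def matrix_vector_mult_diff_distrib)
  have s3: "(norm (A *v x1 + B *v yk))\<^sup>2 = (norm r)\<^sup>2 + 2 * (r \<bullet> (A *v d)) + (norm (A *v d))\<^sup>2"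
    using nsq[of r 1 "A *v d"] by (simp add: Ax1 r_def algebra_simps)
  have s4: "\<beta> * (norm (A *v d))\<^sup>2 \<le> \<beta> * (LA * (norm d)\<^sup>2)"
    using eig_bound[OF LA, of d] pos(3) by (simp add: mult_left_mono)
  have gA: "gk \<bullet> (A *v x1) = gk \<bullet> (A *v xk) + gk \<bullet> (A *v d)" by (simp add: Ax1 inner_add_right)
  have "aug_lag g f h A B \<beta> xk yk gk - aug_lag g f h A B \<beta> x1 yk gk
      = g xk yk - g x1 yk + f xk - f x1 + gk \<bullet> (A *v xk) - gk \<bullet> (A *v x1)
        + \<beta> / 2 * ((norm r)\<^sup>2 - (norm (A *v x1 + B *v yk))\<^sup>2)"
    unfolding aug_lag_def r_def by (simp add: inner_add_right algebra_simps)
  also have "\<dots> \<ge> (Lx - Lg - \<beta> * LA) / 2 * (norm d)\<^sup>2"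
    using s1' s2 s3 s4 by (simp add: inner_commute algebra_simps) (simp add: field_simps)
  finally show "aug_lag g f h A B \<beta> (x k) (y k) (\<gamma> k) - aug_lag g f h A B \<beta> (x (Suc k)) (y k) (\<gamma> k)
             \<ge> (Lx - Lg - \<beta> * LA) / 2 * (norm (x (Suc k) - x k))\<^sup>2"
    by (simp add: xk_def x1_def yk_def gk_def d_def)
qed

end
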